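(* Consider a buyer with linear valuation $v(\mathbf{x})=\sum_{j=1}^m\tau_jx_j$ ($\tau_j\ge0$) and budget $b\in\mathbb{R}_{\ge0}$. Let $\mathbf{p}$ be a monotone lower-continuous pricing function and $\hat{\mathbf{p}}=\mathrm{conv}(\mathbf{p})$. Then $r(\hat{\mathbf{p}}\mid v,b)\ge r(\mathbf{p}\mid v,b)$.
   Context: A pricing function is a monotone $\mathbf{p}:[0,1]^m\to\mathbb{R}_{\ge0}$ with $\mathbf{p}(\mathbf{0})=0$. For budget $b\in\mathbb{R}_{\ge0}\cup\{\infty\}$: $F(\mathbf{p}\mid b)=\{\mathbf{x}:\mathbf{p}(\mathbf{x})\le b\}$; $u^*=\sup_{\mathbf{x}\in F}(v(\mathbf{x})-\mathbf{p}(\mathbf{x}))$; $\mathrm{Dem}(\mathbf{p}\mid v,b)=\{\mathbf{x}\in F:v(\mathbf{x})-\mathbf{p}(\mathbf{x})=u^*\}$; $r(\mathbf{p}\mid v,b)=\sup_{\mathbf{x}\in\mathrm{Dem}}\mathbf{p}(\mathbf{x})$. $\mathrm{conv}(\mathbf{p})(\mathbf{x})=\inf U(\mathbf{x})$ where $U(\mathbf{x})$ is the set of $y$ for which there exist $k\in\mathbb{N}$, $\lambda\in[0,1]^k$ with $\sum\lambda_i=1$, and $\mathbf{x}^{(i)}\in[0,1]^m$ with $\mathbf{x}=\sum\lambda_i\mathbf{x}^{(i)}$ and $y\ge\sum\lambda_i\mathbf{p}(\mathbf{x}^{(i)})$. Lower-continuous: $f(\hat{\mathbf{x}})=\sup_{\delta>0}\inf_{\|\mathbf{x}-\hat{\mathbf{x}}\|_\infty\le\delta}f(\mathbf{x})$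 for all $\hat{\mathbf{x}}$. *)

theory Defs
  imports "HOL-Analysis.Analysis"
begin

text \<open>Goods are indexed by a finite type 'm (so m = CARD('m)); bundles are vectors
  in real^'m and the domain is the cube [0,1]^m.\<close>

definition cube :: "(real^'m) set" where
  "cube = {x. \<forall>i. 0 \<le> x$i \<and> x$i \<le> 1}"

definition pricing_function :: "(real^'m \<Rightarrow> real) \<Rightarrow> bool" where
  "pricing_function p \<longleftrightarrow>
     (\<forall>x\<in>cube. 0 \<le> p x) \<and> p 0 = 0 \<and>
     (\<forall>x\<in>cube. \<forall>y\<in>cube. (\<forall>i. x$i \<le> y$i) \<longrightarrow> p x \<le> p y)"

definition lower_continuous :: "(real^'m \<Rightarrow> real) \<Rightarrow> bool" where
  "lower_continuous f \<longleftrightarrow>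
     (\<forall>xh\<in>cube. f xh =
        Sup {Inf (f ` {x\<in>cube. \<forall>i. \<bar>x$i - xh$i\<bar> \<le> \<delta>}) | \<delta>::real. \<delta> > 0})"

definition linear_val :: "real^'m \<Rightarrow> real^'m \<Rightarrow> real" where
  "linear_val \<tau> x = (\<Sum>j\<in>UNIV. \<tau>$j * x$j)"

definition feasible :: "(real^'m \<Rightarrow> real) \<Rightarrow> real \<Rightarrow> (real^'m) set" where
  "feasible p b = {x\<in>cube. p x \<le> b}"

definition opt_util :: "(real^'m \<Rightarrow> real) \<Rightarrow> (real^'m \<Rightarrow> real) \<Rightarrow> real \<Rightarrow> ereal" where
  "opt_util p v b = (SUP x\<in>feasible p b. ereal (v x - p x))"

definition demand :: "(real^'m \<Rightarrow> real) \<Rightarrow> (real^'m \<Rightarrow> real) \<Rightarrow> real \<Rightarrow> (real^'m) set" where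
  "demand p v b = {x\<in>feasible p b. ereal (v x - p x) = opt_util p v b}"

text \<open>Revenue: supremum of prices over the demand set, in the extended reals
  (equal to -\<infinity> if the demand set is empty).\<close>
definition revenue :: "(real^'m \<Rightarrow> real) \<Rightarrow> (real^'m \<Rightarrow> real) \<Rightarrow> real \<Rightarrow> ereal" where
  "revenue p v b = (SUP x\<in>demand p v b. ereal (p x))"

definition conv_env :: "(real^'m \<Rightarrow> real) \<Rightarrow> real^'m \<Rightarrow> real" where
  "conv_env p x = Inf {y. \<exists>(k::nat) (lam::nat \<Rightarrow> real) (xs::nat \<Rightarrow> real^'m).
       (\<forall>i<k. 0 \<le> lam i \<and> lam i \<le> 1 \<and> xs i \<in> cube) \<and> (\<Sum>i<k. lam i) = 1 \<and>
       x = (\<Sum>i<k. lam i *\<^sub>R xs i) \<and> y \<ge> (\<Sum>i<k. lam i * p (xs i))}"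

end

theory Submission
  imports Defs
begin

lemma cube_eq: "cube = cbox (0::real^'m) (vec 1)"
  unfolding cube_def interval_cbox_cart[symmetric] by (auto simp: less_eq_vec_def)

lemma convex_cube: "convex (cube :: (real^'m) set)"
  by (simp add: cube_eq)

lemma compact_cube: "compact (cube :: (real^'m) set)"
  by (simp add: cube_eq)

lemma linear_val_comb:
  "linear_val \<tau> (a *\<^sub>R x + c *\<^sub>R y) = a * linear_val \<tau> x + c * linear_val \<tau> y"
  by (simp add: linear_val_def sum_distrib_left sum.distrib algebra_simps)

lemma linear_val_sum:
  "linear_val \<tau> (\<Sum>w\<in>S. u w *\<^sub>R f w) = (\<Sum>w\<in>S. u w * linear_val \<tau> (f w))"
proof -
  have "linear_val \<tau> (\<Sum>w\<in>S. u w *\<^sub>R f w) = (\<Sum>j\<in>UNIV. \<Sum>w\<in>S. u w * (\<tau>$j * f w $ j))"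
    unfolding linear_val_def by (simp add: sum_distrib_left mult.left_commute)
  also have "\<dots> = (\<Sum>w\<in>S. \<Sum>j\<in>UNIV. u w * (\<tau>$j * f w $ j))" by (rule sum.swap)
  also have "\<dots> = (\<Sum>w\<in>S. u w * linear_val \<tau> (f w))"
    unfolding linear_val_def by (simp add: sum_distrib_left)
  finally show ?thesis .
qed

lemma p_le_P:
  assumes pf: "pricing_function p" and x: "x \<in> cube"
  shows "p x \<le> p (vec 1)"
  using pf x unfolding pricing_function_def by (auto simp: cube_def)

lemma p_nonneg:
  assumes pf: "pricing_function p" and x: "x \<in> cube"
  shows "0 \<le> p x"
  using pf x unfolding pricing_function_def by auto

lemma conv_env_le:
  fixes p :: "real^'m \<Rightarrow> real" and x :: "real^'m" and k :: nat and lam :: "nat \<Rightarrow> real"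
    and xs :: "nat \<Rightarrow> real^'m"
  assumes pf: "pricing_function p"
    and h: "\<forall>i<k. 0 \<le> lam i \<and> lam i \<le> 1 \<and> xs i \<in> cube" "(\<Sum>i<k. lam i) = 1"
       "x = (\<Sum>i<k. lam i *\<^sub>R xs i)" "y \<ge> (\<Sum>i<k. lam i * p (xs i))"
  shows "conv_env p x \<le> y"
  unfolding conv_env_def
proof (rule cInf_lower)
  show "y \<in> {y. \<exists>(k::nat) (lam::nat \<Rightarrow> real) (xs::nat \<Rightarrow> real^'m).
       (\<forall>i<k. 0 \<le> lam i \<and> lam i \<le> 1 \<and> xs i \<in> cube) \<and> (\<Sum>i<k. lam i) = 1 \<and>
       x = (\<Sum>i<k. lam i *\<^sub>R xs i) \<and> y \<ge> (\<Sum>i<k. lam i * p (xs i))}"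
    using h by blast
  show "bdd_below {y. \<exists>(k::nat) (lam::nat \<Rightarrow> real) (xs::nat \<Rightarrow> real^'m).
       (\<forall>i<k. 0 \<le> lam i \<and> lam i \<le> 1 \<and> xs i \<in> cube) \<and> (\<Sum>i<k. lam i) = 1 \<and>
       x = (\<Sum>i<k. lam i *\<^sub>R xs i) \<and> y \<ge> (\<Sum>i<k. lam i * p (xs i))}"
  proof (rule bdd_belowI[of _ 0], clarify)
    fix y :: real and k :: nat and lam :: "nat \<Rightarrow> real" and xs :: "nat \<Rightarrow> real^'m"
    assume a: "\<forall>i<k. 0 \<le> lam i \<and> lam i \<le> 1 \<and> xs i \<in> (cube::(real^'m) set)"
      "(\<Sum>i<k. lam i * p (xs i)) \<le> y"
    have "0 \<le> (\<Sum>i<k. lam i * p (xs i))"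
    proof (rule sum_nonneg)
      fix i assume "i \<in> {..<k}"
      then show "0 \<le> lam i * p (xs i)" using a(1) p_nonneg[OF pf, of "xs i"] by simp
    qed
    then show "0 \<le> y" using a by linarith
  qed
qed

definition KK :: "(real^'m \<Rightarrow> real) \<Rightarrow> ((real^'m) \<times> real) set" where
  "KK p = {z. fst z \<in> cube \<and> p (fst z) \<le> snd z \<and> snd z \<le> p (vec 1)}"

lemma KK_closed:
  assumes pf: "pricing_function p" and lc: "lower_continuous p"
  shows "closed (KK p)"
  unfolding closed_sequential_limits
proof (intro allI impI, elim conjE)
  fix s l assume s: "\<forall>n. s n \<in> KK p" and lim: "s \<longlonglongrightarrow> l"
  obtain a t where l: "l = (a,t)" by (cases l)
  have la: "(\<lambda>n. fst (s n)) \<longlonglongrightarrow> a" using tendsto_fst[OF lim] l by simp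
  have lt: "(\<lambda>n. snd (s n)) \<longlonglongrightarrow> t" using tendsto_snd[OF lim] l by simp
  have acube: "a \<in> cube"
  proof -
    have "\<forall>n. fst (s n) \<in> cube" using s unfolding KK_def by blast
    then show ?thesis
      using compact_cube[THEN compact_imp_closed, unfolded closed_sequential_limits, rule_format, of "\<lambda>n. fst (s n)" a] la by blast
  qed
  have tP: "t \<le> p (vec 1)"
    by (rule LIMSEQ_le_const2[OF lt]) (use s in \<open>auto simp: KK_def\<close>)
  have "p a \<le> t"
  proof -
    let ?N = "\<lambda>\<delta>. {x\<in>cube. \<forall>i. \<bar>x$i - a$i\<bar> \<le> \<delta>}"
    have "p a = Sup {Inf (p ` ?N \<delta>) | \<delta>::real. \<delta> > 0}"
      using lc acube unfolding lower_continuous_def by blast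
    also have "\<dots> \<le> t"
    proof (rule cSup_least)
      show "{Inf (p ` ?N \<delta>) | \<delta>::real. \<delta> > 0} \<noteq> {}" using zero_less_one by blast
    next
      fix r assume "r \<in> {Inf (p ` ?N \<delta>) | \<delta>::real. \<delta> > 0}"
      then obtain \<delta> :: real where \<delta>: "\<delta> > 0" "r = Inf (p ` ?N \<delta>)" by auto
      have "eventually (\<lambda>n. dist (fst (s n)) a < \<delta>) sequentially"
        using la \<delta>(1) unfolding tendsto_iff by blast
      then have ev: "eventually (\<lambda>n. r \<le> snd (s n)) sequentially"
      proof (rule eventually_mono)
        fix n assume d: "dist (fst (s n)) a < \<delta>"
        have "fst (s n) \<in> ?N \<delta>"
        proof -
          have "\<forall>i. \<bar>fst (s n) $ i - a $ i\<bar> \<le> \<delta>"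
          proof
            fix i
            have "\<bar>(fst (s n) - a) $ i\<bar> \<le> norm (fst (s n) - a)" by (rule component_le_norm_cart)
            then show "\<bar>fst (s n) $ i - a $ i\<bar> \<le> \<delta>" using d by (simp add: dist_norm)
          qed
          then show ?thesis using s by (auto simp: KK_def)
        qed
        moreover have "bdd_below (p ` ?N \<delta>)"
          by (rule bdd_belowI[of _ 0]) (use p_nonneg[OF pf] in blast)
        ultimately have "r \<le> p (fst (s n))" unfolding \<delta>(2)
          by (simp add: cInf_lower)
        also have "\<dots> \<le> snd (s n)" using s by (auto simp: KK_def)
        finally show "r \<le> snd (s n)" .
      qed
      show "r \<le> t" using tendsto_lowerbound[OF lt ev] by simp
    qed
    finally show ?thesis .
  qed
  then show "l \<in> KK p" using l acube tP by (auto simp: KK_def)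
qed

lemma KK_compact:
  assumes pf: "pricing_function p" and lc: "lower_continuous p"
  shows "compact (KK p)"
proof -
  have eq: "KK p = (cube \<times> cbox 0 (p (vec 1))) \<inter> KK p"
  proof -
    have "KK p \<subseteq> cube \<times> cbox 0 (p (vec 1))"
    proof
      fix z assume z: "z \<in> KK p"
      then have "fst z \<in> cube" "p (fst z) \<le> snd z" "snd z \<le> p (vec 1)" unfolding KK_def by auto
      moreover have "0 \<le> p (fst z)" using p_nonneg[OF pf] calculation(1) .
      ultimately show "z \<in> cube \<times> cbox 0 (p (vec 1))" by (cases z) auto
    qed
    then show ?thesis by blast
  qed

  have c: "compact ((cube \<times> cbox 0 (p (vec 1))) \<inter> KK p)"
    using compact_Int_closed[OF compact_Times[OF compact_cube compact_cbox] KK_closed[OF pf lc]] .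
  show ?thesis by (subst eq) (rule c)
qed

lemma sum_shift1: "sum g {1..(k::nat)} = (\<Sum>i<k. g (Suc i))"
  using sum.atLeast1_atMost_eq[of g k] by simp

lemma C_le:
  fixes p :: "real^'m \<Rightarrow> real" and x :: "real^'m" and t :: real
  assumes pf: "pricing_function p" and z: "(x,t) \<in> convex hull (KK p)"
  shows "x \<in> cube \<and> conv_env p x \<le> t"
proof -
  obtain k :: nat and u :: "nat \<Rightarrow> real" and w :: "nat \<Rightarrow> (real^'m) \<times> real"
    where w: "\<forall>i\<in>{1..k}. 0 \<le> u i \<and> w i \<in> KK p" and su: "sum u {1..k} = 1"
      and sw: "(\<Sum>i = 1..k. u i *\<^sub>R w i) = (x,t)"
    using z unfolding convex_hull_indexed by blast
  define lam where "lam i = u (Suc i)" for i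
  define xs where "xs i = fst (w (Suc i))" for i
  have w': "\<forall>i<k. 0 \<le> lam i \<and> xs i \<in> cube \<and> p (xs i) \<le> snd (w (Suc i))"
    using w by (auto simp: lam_def xs_def KK_def)
  have sl: "(\<Sum>i<k. lam i) = 1" using su by (simp add: lam_def sum.atLeast1_atMost_eq)
  have le1: "\<forall>i<k. lam i \<le> 1"
  proof (intro allI impI)
    fix i assume i: "i < k"
    have "u (Suc i) \<le> sum u {1..k}" by (rule member_le_sum) (use i w in auto)
    then show "lam i \<le> 1" using su by (simp add: lam_def)
  qed
  have x: "x = (\<Sum>i<k. lam i *\<^sub>R xs i)"
    using arg_cong[OF sw, of fst] by (simp add: fst_sum sum.atLeast1_atMost_eq lam_def xs_def)
  have t: "t = (\<Sum>i<k. lam i * snd (w (Suc i)))"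
    using arg_cong[OF sw, of snd] by (simp add: snd_sum sum.atLeast1_atMost_eq lam_def)
  have "(\<Sum>i<k. lam i * p (xs i)) \<le> t" unfolding t
    by (rule sum_mono) (use w' in \<open>auto intro: mult_left_mono\<close>)
  then have "conv_env p x \<le> t" using conv_env_le[OF pf _ sl x] w' le1 by blast
  moreover have "x \<in> cube" unfolding x by (rule convex_sum[OF _ convex_cube sl]) (use w' in auto)
  ultimately show ?thesis by blast
qed

lemma C_mem:
  fixes p :: "real^'m \<Rightarrow> real" and x :: "real^'m"
  assumes pf: "pricing_function p" and lc: "lower_continuous p" and x: "x \<in> cube"
  shows "(x, conv_env p x) \<in> convex hull (KK p)"
proof -
  have cl: "closed (convex hull (KK p))"
    by (rule compact_imp_closed[OF compact_convex_hull[OF KK_compact[OF pf lc]]])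
  let ?S = "{y. \<exists>(k::nat) (lam::nat \<Rightarrow> real) (xs::nat \<Rightarrow> real^'m).
       (\<forall>i<k. 0 \<le> lam i \<and> lam i \<le> 1 \<and> xs i \<in> cube) \<and> (\<Sum>i<k. lam i) = 1 \<and>
       x = (\<Sum>i<k. lam i *\<^sub>R xs i) \<and> y \<ge> (\<Sum>i<k. lam i * p (xs i))}"
  have "\<forall>e>0. \<exists>z\<in>convex hull (KK p). dist z (x, conv_env p x) < e"
  proof (intro allI impI)
    fix e :: real assume e: "e > 0"
    have "p x \<in> ?S"
      apply (rule CollectI)
      apply (rule exI[where x="1::nat"])
      apply (rule exI[where x="\<lambda>_. 1::real"])
      apply (rule exI[where x="\<lambda>_. x"])
      using x by simp
    then have ne: "?S \<noteq> {}" by blast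
    have "Inf ?S < conv_env p x + e" using e by (simp add: conv_env_def)
    then obtain y where "y \<in> ?S" "y < conv_env p x + e" using cInf_lessD[OF ne] by blast
    then obtain k :: nat and lam :: "nat \<Rightarrow> real" and xs :: "nat \<Rightarrow> real^'m" where h: "\<forall>i<k. 0 \<le> lam i \<and> lam i \<le> 1 \<and> xs i \<in> cube"
      "(\<Sum>i<k. lam i) = 1" "x = (\<Sum>i<k. lam i *\<^sub>R xs i)" "y \<ge> (\<Sum>i<k. lam i * p (xs i))"
      and ye: "y < conv_env p x + e"
      by blast
    define t where "t = (\<Sum>i<k. lam i * p (xs i))"
    have mem: "(x, t) \<in> convex hull (KK p)"
    proof -
      have "(\<Sum>i<k. lam i *\<^sub>R (xs i, p (xs i))) \<in> convex hull (KK p)"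
      proof (rule convex_sum)
        show "finite {..<k}" by simp
        show "convex (convex hull KK p)" by simp
        show "sum lam {..<k} = 1" by (rule h(2))
        fix i assume i: "i \<in> {..<k}"
        then show "0 \<le> lam i" using h(1) by simp
        have "xs i \<in> cube" using i h(1) by simp
        then have "(xs i, p (xs i)) \<in> KK p" using p_le_P[OF pf] by (simp add: KK_def)
        then show "(xs i, p (xs i)) \<in> convex hull KK p" by (rule hull_inc)
      qed
      moreover have "(\<Sum>i<k. lam i *\<^sub>R (xs i, p (xs i))) = (x, t)"
        using h(3) by (simp add: prod_eq_iff fst_sum snd_sum t_def)
      ultimately show ?thesis by simp
    qed
    have "conv_env p x \<le> t" unfolding t_def by (rule conv_env_le[OF pf h(1,2,3)]) simp
    then have "dist (x, t) (x, conv_env p x) < e" using h(4) ye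
      by (simp add: dist_Pair_Pair dist_real_def t_def)
    then show "\<exists>z\<in>convex hull (KK p). dist z (x, conv_env p x) < e" using mem by blast
  qed
  then show ?thesis using closed_approachable[OF cl] by blast
qed

theorem mainTheorem16:
  fixes p :: "real^'m \<Rightarrow> real" and \<tau> :: "real^'m" and b :: real
  assumes "\<forall>j. 0 \<le> \<tau>$j"
    and "b \<ge> 0"
    and "pricing_function p"
    and "lower_continuous p"
  shows "revenue (conv_env p) (linear_val \<tau>) b \<ge> revenue p (linear_val \<tau>) b"
proof -
  note pf = assms(3) and lc = assms(4) and b0 = assms(2)
  define v where "v = linear_val \<tau>"
  define q where "q = conv_env p"
  define C where "C = convex hull (KK p)"
  have Ccomp: "compact C" unfolding C_def by (rule compact_convex_hull[OF KK_compact[OF pf lc]])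
  have Cconv: "convex C" unfolding C_def by simp
  have KC: "KK p \<subseteq> C" unfolding C_def by (rule hull_subset)
  have Ca: "x \<in> cube \<and> q x \<le> t" if "(x,t) \<in> C" for x t
    using C_le[OF pf] that unfolding C_def q_def by blast
  have Cb: "(x, q x) \<in> C" if "x \<in> cube" for x
    using C_mem[OF pf lc that] unfolding C_def q_def .
  have pK: "(x, p x) \<in> KK p" if "x \<in> cube" for x
    using p_le_P[OF pf that] that by (simp add: KK_def)
  have qp: "q x \<le> p x" if "x \<in> cube" for x
    using Ca[of x "p x"] pK[OF that] KC by blast
  define D where "D = C \<inter> {z. snd z \<le> b}"
  have Dcomp: "compact D" unfolding D_def
    by (rule compact_Int_closed[OF Ccomp]) (intro closed_Collect_le continuous_intros)
  have 0: "(0::real^'m) \<in> cube" by (simp add: cube_def)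
  have "((0::real^'m), 0::real) \<in> KK p"
    using pf p_nonneg[OF pf, of "vec 1"] by (simp add: KK_def pricing_function_def cube_def)
  then have D0: "((0::real^'m), 0::real) \<in> D" using KC b0 by (auto simp: D_def)
  have cont: "continuous_on D (\<lambda>z. v (fst z) - snd z)"
    unfolding v_def linear_val_def by (intro continuous_intros)
  obtain z0 where z0: "z0 \<in> D" and z0max: "\<forall>z\<in>D. v (fst z) - snd z \<le> v (fst z0) - snd z0"
    using continuous_attains_sup[OF Dcomp _ cont] D0 by blast
  obtain y t0 where yt: "z0 = (y, t0)" by (cases z0)
  have yC: "(y,t0) \<in> C" and t0b: "t0 \<le> b" using z0 yt by (auto simp: D_def)
  have ycube: "y \<in> cube" and qy: "q y \<le> t0" using Ca[OF yC] by auto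
  have "(y, q y) \<in> D" using Cb[OF ycube] qy t0b by (auto simp: D_def)
  then have "v y - q y \<le> v y - t0" using z0max yt by force
  then have t0q: "t0 = q y" using qy by linarith
  define W where "W = v y - t0"
  have Dmax: "v (fst z) - snd z \<le> W" if "z \<in> D" for z using z0max that yt W_def by auto
  have Wq: "v x - q x \<le> W" if "x \<in> cube" "q x \<le> b" for x
    using Dmax[of "(x, q x)"] Cb[OF that(1)] that(2) by (auto simp: D_def)
  have yfeas: "y \<in> feasible q b" using ycube t0q t0b by (simp add: feasible_def)
  have opt_q: "opt_util q v b = ereal W"
    unfolding opt_util_def
  proof (rule antisym)
    show "(SUP x\<in>feasible q b. ereal (v x - q x)) \<le> ereal W"
      by (rule SUP_least) (auto simp: feasible_def intro: Wq)
    show "ereal W \<le> (SUP x\<in>feasible q b. ereal (v x - q x))"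
      by (rule SUP_upper2[OF yfeas]) (simp add: W_def t0q)
  qed
  have ydem: "y \<in> demand q v b" using yfeas opt_q by (simp add: demand_def W_def t0q)
  have revp_b: "revenue p v b \<le> ereal b"
    unfolding revenue_def by (rule SUP_least) (auto simp: demand_def feasible_def)
  show ?thesis
    unfolding v_def[symmetric] q_def[symmetric]
  proof (cases "t0 < b")
    case False
    then have "t0 = b" using t0b by simp
    have "ereal b \<le> revenue q v b"
      unfolding revenue_def by (rule SUP_upper2[OF ydem]) (use \<open>t0 = b\<close> t0q in simp)
    then show "revenue p v b \<le> revenue q v b" using revp_b by simp
  next
    case True
    have gmax: "v zx - zs \<le> W" if zC: "(zx, zs) \<in> C" for zx zs
    proof (rule ccontr)
      assume "\<not> v zx - zs \<le> W"
      then have gt: "v zx - zs > W" by simp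
      define d where "d = \<bar>zs - t0\<bar>"
      define th where "th = (b - t0) / (d + (b - t0))"
      have dpos: "d \<ge> 0" by (simp add: d_def)
      have th0: "0 < th" and th1: "th \<le> 1" using True dpos by (auto simp: th_def field_simps)
      have thd: "th * d \<le> b - t0"
      proof -
        have "th * d = (b - t0) * (d / (d + (b - t0)))" by (simp add: th_def)
        also have "\<dots> \<le> (b - t0) * 1"
          using True dpos by (intro mult_left_mono) (auto simp: field_simps)
        finally show ?thesis by simp
      qed
      define m where "m = (1 - th) *\<^sub>R (y, t0) + th *\<^sub>R (zx, zs)"
      have mC: "m \<in> C" unfolding m_def
        by (rule convexD[OF Cconv yC zC]) (use th0 th1 in auto)
      have "snd m = t0 + th * (zs - t0)" by (simp add: m_def algebra_simps)
      also have "\<dots> \<le> t0 + th * d"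
        using th0 by (intro add_left_mono mult_left_mono) (auto simp: d_def)
      also have "\<dots> \<le> b" using thd by simp
      finally have "m \<in> D" using mC by (simp add: D_def)
      then have le: "v (fst m) - snd m \<le> W" by (rule Dmax)
      have "v (fst m) - snd m = (1 - th) * (v y - t0) + th * (v zx - zs)"
      proof -
        have fm: "fst m = (1 - th) *\<^sub>R y + th *\<^sub>R zx" "snd m = (1 - th) * t0 + th * zs"
          by (simp_all add: m_def)
        show ?thesis unfolding fm v_def linear_val_comb by (simp add: algebra_simps)
      qed
      also have "\<dots> > (1 - th) * W + th * W"
        using th0 th1 gt by (simp add: W_def)
      finally show False using le by (simp add: algebra_simps)
    qed
    obtain S u where S: "finite S" "S \<subseteq> KK p" and u0: "\<forall>w\<in>S. 0 \<le> u w" and u1: "sum u S = 1"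
      and us: "(\<Sum>w\<in>S. u w *\<^sub>R w) = (y, t0)"
      using yC unfolding C_def convex_hull_explicit by blast
    have ysum: "y = (\<Sum>w\<in>S. u w *\<^sub>R fst w)" using arg_cong[OF us, of fst] by (simp add: fst_sum)
    have tsum: "t0 = (\<Sum>w\<in>S. u w * snd w)" using arg_cong[OF us, of snd] by (simp add: snd_sum)
    have wle: "v (fst w) - snd w \<le> W" if "w \<in> S" for w
      using gmax[of "fst w" "snd w"] S(2) KC that by auto
    have "(\<Sum>w\<in>S. u w * (W - (v (fst w) - snd w))) = (\<Sum>w\<in>S. W * u w - u w * v (fst w) + u w * snd w)"
      by (rule sum.cong) (simp_all add: algebra_simps)
    also have "\<dots> = W * sum u S - ((\<Sum>w\<in>S. u w * v (fst w)) - (\<Sum>w\<in>S. u w * snd w))"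
      by (simp add: sum.distrib sum_subtractf sum_distrib_left)
    also have "\<dots> = 0"
      using u1 by (simp add: W_def ysum tsum v_def linear_val_sum)
    finally have s0: "(\<Sum>w\<in>S. u w * (W - (v (fst w) - snd w))) = 0" .
    have allz: "\<forall>w\<in>S. u w * (W - (v (fst w) - snd w)) = 0"
    proof -
      have "\<And>w. w \<in> S \<Longrightarrow> 0 \<le> u w * (W - (v (fst w) - snd w))"
        using u0 wle by (simp add: mult_nonneg_nonneg)
      from sum_nonneg_eq_0_iff[OF S(1), of "\<lambda>w. u w * (W - (v (fst w) - snd w))", OF this] s0
      show ?thesis by simp
    qed
    have "\<exists>w\<in>S. u w * snd w < u w * b"
    proof (rule ccontr)
      assume "\<not> (\<exists>w\<in>S. u w * snd w < u w * b)"
      then have "(\<Sum>w\<in>S. u w * b) \<le> (\<Sum>w\<in>S. u w * snd w)"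
        by (intro sum_mono) (simp add: not_less)
      moreover have "(\<Sum>w\<in>S. u w * b) = b" using u1 by (simp add: sum_distrib_right[symmetric])
      ultimately have "b \<le> t0" using tsum by simp
      then show False using True by simp
    qed
    then obtain w where wS: "w \<in> S" and wb: "u w * snd w < u w * b" by blast
    have upos: "u w > 0"
    proof (rule ccontr)
      assume "\<not> u w > 0"
      moreover have "0 \<le> u w" using u0 wS by blast
      ultimately have "u w = 0" by linarith
      then show False using wb by simp
    qed
    have sb: "snd w < b" using wb upos by simp
    have "u w * (W - (v (fst w) - snd w)) = 0" using allz wS by blast
    then have wW: "v (fst w) - snd w = W" using upos by simp
    have wK: "fst w \<in> cube" "p (fst w) \<le> snd w" using S(2) wS by (auto simp: KK_def)
    have wfeas: "fst w \<in> feasible p b" using wK sb by (simp add: feasible_def)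
    have opt_p: "ereal W \<le> opt_util p v b"
      unfolding opt_util_def by (rule SUP_upper2[OF wfeas]) (use wW wK in simp)
    have demsub: "x \<in> demand q v b \<and> q x = p x" if xd: "x \<in> demand p v b" for x
    proof -
      have xc: "x \<in> cube" and xb: "p x \<le> b" and xu: "ereal (v x - p x) = opt_util p v b"
        using xd by (auto simp: demand_def feasible_def)
      have "ereal W \<le> ereal (v x - p x)" using xu opt_p by simp
      then have "W \<le> v x - p x" by simp
      moreover have "v x - q x \<le> W" using gmax[of x "q x"] Cb[OF xc] by simp
      moreover have "q x \<le> p x" using qp[OF xc] .
      ultimately have eq: "q x = p x" by linarith
      have "v x - q x = W" using eq \<open>W \<le> v x - p x\<close> \<open>v x - q x \<le> W\<close> by linarith
      then have "x \<in> demand q v b" using xc xb eq opt_q by (simp add: demand_def feasible_def)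
      then show ?thesis using eq by simp
    qed
    show "revenue p v b \<le> revenue q v b"
      unfolding revenue_def
    proof (rule SUP_least)
      fix x assume "x \<in> demand p v b"
      then have "x \<in> demand q v b" "q x = p x" using demsub by auto
      then show "ereal (p x) \<le> (SUP x\<in>demand q v b. ereal (q x))"
        using SUP_upper[of x "demand q v b" "\<lambda>x. ereal (q x)"] by simp
    qed
  qed
qed

end
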